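(* Let $1<\alpha<2$ and let $Z=(Z_t)_{t\ge0}$ be an $\alpha$-stable Lévy process started at $0$ with Lévy triplet $(0,\nu_Z,\gamma)$, $\nu_Z(\mathrm{d}z)=(A\mathbf{1}_{z>0}+B\mathbf{1}_{z<0})|z|^{-(\alpha+1)}\mathrm{d}z$ for constants $A,B>0$, which is a martingale, i.e. $\gamma+\int_{|z|\ge1}z\,\nu_Z(\mathrm{d}z)=0$. Let $\kappa=1/\alpha$, let $\zeta$ be a subordinator independent of $Z$ with Laplace exponent $\psi$ satisfying $\psi(\kappa)=\kappa$, and let $X$ be the process associated with $Z$ and $\zeta$ (defined in the context). Then for all $t\ge s>0$, \[ X_t=(t/s)^{\kappa}\bigl(R_{s,t}^{\kappa}X_s+s^{\kappa}(1-R_{s,t})^{\kappa}\xi_{s,t}\bigr), \] where $R_{s,t}\stackrel{d}{=}e^{-\zeta_{\ln(t/s)}}$, $\xi_{s,t}\stackrel{d}{=}Z_1$, and $R_{s,t}$, $\xi_{s,t}$, $X_s$ are independent (that is, $(X_s,X_t)$ has the same joint law as the pair with $X_t$ replaced by this expression).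
   Context: $Z$ is a Markov process which is $\kappa$-self-similar with $\kappa=1/\alpha$: $(Z_{ct})_{t\ge0}\stackrel{d}{=}(c^\kappa Z_t)_{t\ge0}$. A subordinator $\zeta$ (nonnegative independent stationary increments, $\zeta_0=0$) has Laplace exponent $\psi$ defined by $\mathbb{E}[e^{-\lambda\zeta_a}]=e^{-a\psi(\lambda)}$. The process $X$ associated with $Z$ and $\zeta$ is the process $(X_t)_{t\ge0}$, $X_0=0$, such that for every $a\in\mathbb{R}$, $(X_t)_{t\ge e^{-a}}$ has the same finite-dimensional distributions as $(t^{\kappa}e^{-\kappa\zeta_{a+\ln t}}Z_{e^{\zeta_{a+\ln t}}})_{t\ge e^{-a}}$. *)

theory Defs
  imports "HOL-Probability.Probability"
begin

text \<open>Processes are indexed by real times; only times t \<ge> 0 are meaningful.\<close>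

definition indep_increments :: "'a measure \<Rightarrow> (real \<Rightarrow> 'a \<Rightarrow> real) \<Rightarrow> bool" where
  "indep_increments M P \<longleftrightarrow>
     (\<forall>(n::nat) (ts::nat \<Rightarrow> real). 0 \<le> ts 0 \<longrightarrow> (\<forall>i<n. ts i < ts (Suc i)) \<longrightarrow>
        prob_space.indep_vars M (\<lambda>_. borel) (\<lambda>i \<omega>. P (ts (Suc i)) \<omega> - P (ts i) \<omega>) {..<n})"

definition stationary_increments :: "'a measure \<Rightarrow> (real \<Rightarrow> 'a \<Rightarrow> real) \<Rightarrow> bool" where
  "stationary_increments M P \<longleftrightarrow>
     (\<forall>s t. 0 \<le> s \<longrightarrow> 0 \<le> t \<longrightarrow>
        distr M borel (\<lambda>\<omega>. P (s + t) \<omega> - P s \<omega>) = distr M borel (\<lambda>\<omega>. P t \<omega> - P 0 \<omega>))"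

definition cadlag_paths :: "(real \<Rightarrow> 'a \<Rightarrow> real) \<Rightarrow> bool" where
  "cadlag_paths P \<longleftrightarrow>
     (\<forall>\<omega>. (\<forall>t\<ge>0. ((\<lambda>r. P r \<omega>) \<longlongrightarrow> P t \<omega>) (at_right t)) \<and>
          (\<forall>t>0. \<exists>l. ((\<lambda>r. P r \<omega>) \<longlongrightarrow> l) (at_left t)))"

definition path :: "(real \<Rightarrow> 'a \<Rightarrow> real) \<Rightarrow> 'a \<Rightarrow> real \<Rightarrow> real" where
  "path P \<omega> = (\<lambda>t\<in>{0..}. P t \<omega>)"

definition stable_density :: "real \<Rightarrow> real \<Rightarrow> real \<Rightarrow> real \<Rightarrow> real" where
  "stable_density \<alpha> A B z =
     (A * indicator {0<..} z + B * indicator {..<0} z) * \<bar>z\<bar> powr (-(\<alpha> + 1))"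

text \<open>Characteristic exponent of a Levy triplet (0, nu, gamma), truncation 1_{|z|<1}:
  E[exp(i u Z_t)] = exp(t * levy_exponent gamma nu u).\<close>
definition levy_exponent :: "real \<Rightarrow> (real \<Rightarrow> real) \<Rightarrow> real \<Rightarrow> complex" where
  "levy_exponent \<gamma> f u =
     \<i> * complex_of_real (\<gamma> * u) +
     (CLINT z|lborel. (iexp (u * z) - 1 - \<i> * complex_of_real (u * z * indicator {z. \<bar>z\<bar> < 1} z))
                        * complex_of_real (f z))"

text \<open>A Levy process started at 0 with triplet (0, nu, gamma), nu having density f.\<close>
definition levy_process :: "'a measure \<Rightarrow> (real \<Rightarrow> 'a \<Rightarrow> real) \<Rightarrow> real \<Rightarrow> (real \<Rightarrow> real) \<Rightarrow> bool" where
  "levy_process M Z \<gamma> f \<longleftrightarrow>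
     (\<forall>t\<ge>0. Z t \<in> borel_measurable M) \<and>
     (\<forall>\<omega>. Z 0 \<omega> = 0) \<and>
     cadlag_paths Z \<and>
     indep_increments M Z \<and> stationary_increments M Z \<and>
     (\<forall>t\<ge>0. \<forall>u. char (distr M borel (Z t)) u = exp (complex_of_real t * levy_exponent \<gamma> f u))"

definition subordinator :: "'a measure \<Rightarrow> (real \<Rightarrow> 'a \<Rightarrow> real) \<Rightarrow> (real \<Rightarrow> real) \<Rightarrow> bool" where
  "subordinator M \<zeta> \<psi> \<longleftrightarrow>
     (\<forall>a\<ge>0. \<zeta> a \<in> borel_measurable M) \<and>
     (\<forall>\<omega>. \<zeta> 0 \<omega> = 0) \<and>
     (\<forall>a\<ge>0. \<forall>\<omega>. 0 \<le> \<zeta> a \<omega>) \<and>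
     indep_increments M \<zeta> \<and> stationary_increments M \<zeta> \<and>
     (\<forall>l\<ge>0. \<forall>a\<ge>0. (LINT \<omega>|M. exp (- l * \<zeta> a \<omega>)) = exp (- a * \<psi> l))"

definition associated_process ::
  "real \<Rightarrow> 'a measure \<Rightarrow> (real \<Rightarrow> 'a \<Rightarrow> real) \<Rightarrow> (real \<Rightarrow> 'a \<Rightarrow> real) \<Rightarrow>
   'b measure \<Rightarrow> (real \<Rightarrow> 'b \<Rightarrow> real) \<Rightarrow> bool" where
  "associated_process \<kappa> M Z \<zeta> N X \<longleftrightarrow>
     (\<forall>t\<ge>0. X t \<in> borel_measurable N) \<and>
     (\<forall>\<omega>. X 0 \<omega> = 0) \<and>
     (\<forall>a J. finite J \<longrightarrow> J \<subseteq> {exp (- a)..} \<longrightarrow>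
        distr N (Pi\<^sub>M J (\<lambda>_. borel)) (\<lambda>\<omega>. \<lambda>t\<in>J. X t \<omega>) =
        distr M (Pi\<^sub>M J (\<lambda>_. borel))
          (\<lambda>\<omega>. \<lambda>t\<in>J. t powr \<kappa> * exp (- \<kappa> * \<zeta> (a + ln t) \<omega>) * Z (exp (\<zeta> (a + ln t) \<omega>)) \<omega>))"

end

theory Submission
  imports Defs
begin



lemma int_pos_0:
  fixes p :: real assumes "p > -1"
  shows "integrable lborel (\<lambda>z. indicator {0<..1} z * z powr p)"
proof -
  have "(\<lambda>x. x powr p) absolutely_integrable_on {0<..1}"
    by (intro nonnegative_absolutely_integrable_1 integrable_on_powr_from_0') (use assms in auto)
  then have "integrable lebesgue (\<lambda>z. indicator {0<..1} z *\<^sub>R z powr p)"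
    unfolding set_integrable_def .
  then show ?thesis
    by (subst (asm) integrable_completion) (auto intro!: borel_measurable_continuous_on_indicator continuous_intros)
qed

lemma int_pos_inf:
  fixes p :: real assumes "p < -1"
  shows "integrable lborel (\<lambda>z. indicator {1..} z * z powr p)"
proof -
  have "(\<lambda>x. x powr p) integrable_on {1..}"
    using has_integral_powr_to_inf[OF assms, of 1] unfolding integrable_on_def by auto
  then have "(\<lambda>x. x powr p) absolutely_integrable_on {1..}"
    by (intro nonnegative_absolutely_integrable_1) auto
  then have "integrable lebesgue (\<lambda>z. indicator {1..} z *\<^sub>R z powr p)"
    unfolding set_integrable_def .
  then show ?thesis
    by (subst (asm) integrable_completion) (auto intro!: borel_measurable_continuous_on_indicator continuous_intros)
qed

lemma int_sym:
  fixes g :: "real \<Rightarrow> real"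
  assumes "integrable lborel g"
  shows "integrable lborel (\<lambda>z. g z + g (- z))"
proof -
  have "integrable lborel (\<lambda>z. g (0 + (-1) * z))"
    by (rule lborel_integrable_real_affine[OF assms]) simp
  from Bochner_Integration.integrable_add[OF assms this] show ?thesis by simp
qed

lemma int_abs_0:
  fixes p :: real assumes "p > -1"
  shows "integrable lborel (\<lambda>z. indicator {z. \<bar>z\<bar> \<le> 1} z * \<bar>z\<bar> powr p)"
proof -
  have "integrable lborel (\<lambda>z. indicator {0<..1} z * z powr p + indicator {0<..1} (-z) * (-z) powr p)"
    using int_sym[OF int_pos_0[OF assms]] by simp
  moreover have "(\<lambda>z. indicator {0<..1} z * z powr p + indicator {0<..1} (-z) * (-z) powr p)
     = (\<lambda>z. indicator {z. \<bar>z\<bar> \<le> 1} z * \<bar>z\<bar> powr p)"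
    by (auto simp: fun_eq_iff indicator_def)
  ultimately show ?thesis by simp
qed

lemma int_abs_inf:
  fixes p :: real assumes "p < -1"
  shows "integrable lborel (\<lambda>z. indicator {z. 1 \<le> \<bar>z\<bar>} z * \<bar>z\<bar> powr p)"
proof -
  have "integrable lborel (\<lambda>z. indicator {1..} z * z powr p + indicator {1..} (-z) * (-z) powr p)"
    using int_sym[OF int_pos_inf[OF assms]] by simp
  moreover have "(\<lambda>z. indicator {1..} z * z powr p + indicator {1..} (-z) * (-z) powr p)
     = (\<lambda>z. indicator {z. 1 \<le> \<bar>z\<bar>} z * \<bar>z\<bar> powr p)"
    by (auto simp: fun_eq_iff indicator_def)
  ultimately show ?thesis by simp
qed




lemma sd_nonneg: "A \<ge> 0 \<Longrightarrow> B \<ge> 0 \<Longrightarrow> stable_density \<alpha> A B z \<ge> 0"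
  unfolding stable_density_def by (auto simp: indicator_def)

lemma sd_le: "A \<ge> 0 \<Longrightarrow> B \<ge> 0 \<Longrightarrow> stable_density \<alpha> A B z \<le> (A + B) * \<bar>z\<bar> powr (-(\<alpha>+1))"
  unfolding stable_density_def by (auto simp: indicator_def intro!: mult_right_mono)

lemma sd_zero[simp]: "stable_density \<alpha> A B 0 = 0"
  unfolding stable_density_def by (auto simp: indicator_def)

lemma sd_meas[measurable]: "stable_density \<alpha> A B \<in> borel_measurable borel"
  unfolding stable_density_def by measurable

lemma sd_scale:
  assumes "l > 0"
  shows "stable_density \<alpha> A B (x / l) = l powr (\<alpha> + 1) * stable_density \<alpha> A B x"
proof -
  have i1: "indicator {0<..} (x / l) = (indicator {0<..} x :: real)"
    using assms by (auto simp: indicator_def divide_pos_pos zero_less_divide_iff)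
  have i2: "indicator {..<0} (x / l) = (indicator {..<0} x :: real)"
    using assms by (auto simp: indicator_def divide_less_0_iff)
  have e: "l powr (\<alpha> + 1) * l powr (-(\<alpha>+1)) = 1"
    using assms by (simp add: powr_add[symmetric])
  have "\<bar>x / l\<bar> powr (-(\<alpha>+1)) = \<bar>x\<bar> powr (-(\<alpha>+1)) / l powr (-(\<alpha>+1))"
    using assms by (simp add: abs_divide powr_divide)
  also have "\<dots> = l powr (\<alpha> + 1) * \<bar>x\<bar> powr (-(\<alpha>+1))"
    using assms e by (simp add: divide_simps)
  finally have "\<bar>x / l\<bar> powr (-(\<alpha>+1)) = l powr (\<alpha> + 1) * \<bar>x\<bar> powr (-(\<alpha>+1))" .
  then show ?thesis unfolding stable_density_def i1 i2 by simp
qed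

lemma iexp_bound1: "cmod (iexp x - 1 - \<i> * complex_of_real x) \<le> x\<^sup>2 / 2"
proof -
  have "cmod (iexp x - (\<Sum>k \<le> 1. (\<i> * x)^k / fact k)) \<le> \<bar>x\<bar>^(Suc 1) / fact (Suc 1)"
    by (rule iexp_approx1)
  then show ?thesis by (simp add: diff_diff_eq power2_eq_square)
qed

lemma iexp_bound2: "cmod (iexp x - 1 - \<i> * complex_of_real x) \<le> 2 + \<bar>x\<bar>"
proof -
  have "cmod (iexp x - 1 - \<i> * complex_of_real x) \<le> cmod (iexp x) + cmod 1 + cmod (\<i> * complex_of_real x)"
    using norm_triangle_ineq4[of "iexp x - 1" "\<i> * complex_of_real x"] norm_triangle_ineq4[of "iexp x" 1]
    by linarith
  also have "\<dots> = 2 + \<bar>x\<bar>" by (simp add: norm_mult)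
  finally show ?thesis .
qed

definition phi :: "real \<Rightarrow> real \<Rightarrow> real \<Rightarrow> real \<Rightarrow> real \<Rightarrow> complex" where
  "phi \<alpha> A B u z = (iexp (u*z) - 1 - \<i> * complex_of_real (u*z)) * complex_of_real (stable_density \<alpha> A B z)"

definition Dm :: "real \<Rightarrow> real \<Rightarrow> real \<Rightarrow> real \<Rightarrow> real \<Rightarrow> real" where
  "Dm \<alpha> A B u z = (A + B) * (u\<^sup>2 / 2 * (indicator {z. \<bar>z\<bar> \<le> 1} z * \<bar>z\<bar> powr (1 - \<alpha>))
     + (2 * (indicator {z. 1 \<le> \<bar>z\<bar>} z * \<bar>z\<bar> powr (-(\<alpha>+1))) + \<bar>u\<bar> * (indicator {z. 1 \<le> \<bar>z\<bar>} z * \<bar>z\<bar> powr (-\<alpha>))))"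

lemma Dm_int:
  assumes "1 < \<alpha>" "\<alpha> < 2"
  shows "integrable lborel (Dm \<alpha> A B u)"
proof -
  have a: "integrable lborel (\<lambda>z. indicator {z. \<bar>z\<bar> \<le> 1} z * \<bar>z\<bar> powr (1 - \<alpha>))"
    by (rule int_abs_0) (use assms in auto)
  have b: "integrable lborel (\<lambda>z. indicator {z. 1 \<le> \<bar>z\<bar>} z * \<bar>z\<bar> powr (-(\<alpha>+1)))"
    by (rule int_abs_inf) (use assms in auto)
  have c: "integrable lborel (\<lambda>z. indicator {z. 1 \<le> \<bar>z\<bar>} z * \<bar>z\<bar> powr (-\<alpha>))"
    by (rule int_abs_inf) (use assms in auto)
  show ?thesis unfolding Dm_def
    by (intro Bochner_Integration.integrable_mult_right Bochner_Integration.integrable_add a b c)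
qed

lemma phi_bound:
  assumes "A \<ge> 0" "B \<ge> 0"
  shows "cmod (phi \<alpha> A B u z) \<le> Dm \<alpha> A B u z"
proof -
  let ?f = "stable_density \<alpha> A B z"
  have f0: "?f \<ge> 0" by (rule sd_nonneg[OF assms])
  have fle: "?f \<le> (A + B) * \<bar>z\<bar> powr (-(\<alpha>+1))" by (rule sd_le[OF assms])
  have nn: "0 \<le> indicator S z * \<bar>z\<bar> powr p" for S p by (simp add: indicator_def)
  have c: "cmod (phi \<alpha> A B u z) = cmod (iexp (u*z) - 1 - \<i> * complex_of_real (u*z)) * ?f"
    unfolding phi_def norm_mult using f0 by simp
  show ?thesis
  proof (cases "z = 0")
    case True
    then show ?thesis unfolding c Dm_def using assms by (simp add: indicator_def)
  next
    case z: False
    show ?thesis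
    proof (cases "\<bar>z\<bar> \<le> 1")
      case True
      have "cmod (phi \<alpha> A B u z) \<le> (u*z)\<^sup>2/2 * ((A + B) * \<bar>z\<bar> powr (-(\<alpha>+1)))"
        unfolding c by (intro mult_mono iexp_bound1 fle f0) auto
      also have "\<dots> = (A + B) * (u\<^sup>2 / 2 * (\<bar>z\<bar>\<^sup>2 * \<bar>z\<bar> powr (-(\<alpha>+1))))"
        by (simp add: power_mult_distrib)
      also have "\<bar>z\<bar>\<^sup>2 * \<bar>z\<bar> powr (-(\<alpha>+1)) = \<bar>z\<bar> powr (1 - \<alpha>)"
      proof -
        have "\<bar>z\<bar> powr 2 = z\<^sup>2" using z by (simp add: powr_numeral)
        have e: "1 - \<alpha> = 2 + (-(\<alpha>+1))" by simp
        have "\<bar>z\<bar> powr (1 - \<alpha>) = \<bar>z\<bar> powr 2 * \<bar>z\<bar> powr (-(\<alpha>+1))"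
          by (simp only: e powr_add)
        then show ?thesis using \<open>\<bar>z\<bar> powr 2 = z\<^sup>2\<close> by simp
      qed
      also have "(A + B) * (u\<^sup>2 / 2 * \<bar>z\<bar> powr (1 - \<alpha>)) \<le> Dm \<alpha> A B u z"
        unfolding Dm_def using True assms nn
        by (intro mult_left_mono) (auto simp: indicator_def intro!: add_nonneg_nonneg)
      finally show ?thesis by simp
    next
      case False
      have "cmod (phi \<alpha> A B u z) \<le> (2 + \<bar>u*z\<bar>) * ((A + B) * \<bar>z\<bar> powr (-(\<alpha>+1)))"
        unfolding c by (intro mult_mono iexp_bound2 fle f0) auto
      also have "\<dots> = (A + B) * (2 * \<bar>z\<bar> powr (-(\<alpha>+1)) + \<bar>u\<bar> * (\<bar>z\<bar> * \<bar>z\<bar> powr (-(\<alpha>+1))))"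
        by (simp add: abs_mult algebra_simps)
      also have "\<bar>z\<bar> * \<bar>z\<bar> powr (-(\<alpha>+1)) = \<bar>z\<bar> powr (-\<alpha>)"
      proof -
        have e: "-\<alpha> = 1 + (-(\<alpha>+1))" by simp
        have "\<bar>z\<bar> powr (-\<alpha>) = \<bar>z\<bar> powr 1 * \<bar>z\<bar> powr (-(\<alpha>+1))"
          by (simp only: e powr_add)
        then show ?thesis using z by simp
      qed
      also have "(A + B) * (2 * \<bar>z\<bar> powr (-(\<alpha>+1)) + \<bar>u\<bar> * \<bar>z\<bar> powr (-\<alpha>)) \<le> Dm \<alpha> A B u z"
        unfolding Dm_def using False assms nn
        by (intro mult_left_mono) (auto simp: indicator_def intro!: add_nonneg_nonneg)
      finally show ?thesis by simp
    qed
  qed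
qed

lemma phi_meas[measurable]: "phi \<alpha> A B u \<in> borel_measurable borel"
proof -
  have c[measurable]: "(\<lambda>z. iexp(u*z) - 1 - \<i> * complex_of_real (u*z)) \<in> borel_measurable borel"
    by (intro borel_measurable_continuous_onI continuous_intros)
  show ?thesis unfolding phi_def by measurable
qed

lemma phi_int:
  assumes "1 < \<alpha>" "\<alpha> < 2" "A \<ge> 0" "B \<ge> 0"
  shows "integrable lborel (phi \<alpha> A B u)"
proof (rule Bochner_Integration.integrable_bound[OF Dm_int[OF assms(1,2)]])
  show "phi \<alpha> A B u \<in> borel_measurable lborel" by simp
  show "AE x in lborel. norm (phi \<alpha> A B u x) \<le> norm (Dm \<alpha> A B u x)"
    using phi_bound[OF assms(3,4)] by (intro AE_I2) (metis abs_ge_self order_trans real_norm_def)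
qed




lemma h_int:
  assumes "1 < \<alpha>" "A \<ge> 0" "B \<ge> 0"
  shows "integrable lborel (\<lambda>z. indicator {z. 1 \<le> \<bar>z\<bar>} z * z * stable_density \<alpha> A B z)"
proof (rule Bochner_Integration.integrable_bound)
  show "integrable lborel (\<lambda>z. (A + B) * (indicator {z. 1 \<le> \<bar>z\<bar>} z * \<bar>z\<bar> powr (-\<alpha>)))"
    by (intro Bochner_Integration.integrable_mult_right int_abs_inf) (use assms in auto)
  show "(\<lambda>z. indicator {z. 1 \<le> \<bar>z\<bar>} z * z * stable_density \<alpha> A B z) \<in> borel_measurable lborel"
    by simp
  show "AE x in lborel. norm (indicator {z. 1 \<le> \<bar>z\<bar>} x * x * stable_density \<alpha> A B x)
     \<le> norm ((A + B) * (indicator {z. 1 \<le> \<bar>z\<bar>} x * \<bar>x\<bar> powr (-\<alpha>)))"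
  proof (intro AE_I2)
    fix z :: real
    show "norm (indicator {z. 1 \<le> \<bar>z\<bar>} z * z * stable_density \<alpha> A B z)
     \<le> norm ((A + B) * (indicator {z. 1 \<le> \<bar>z\<bar>} z * \<bar>z\<bar> powr (-\<alpha>)))"
    proof (cases "1 \<le> \<bar>z\<bar>")
      case True
      then have z: "z \<noteq> 0" by auto
      have "norm (indicator {z. 1 \<le> \<bar>z\<bar>} z * z * stable_density \<alpha> A B z) = \<bar>z\<bar> * stable_density \<alpha> A B z"
        using True sd_nonneg[OF assms(2,3)] by (simp add: abs_mult)
      also have "\<dots> \<le> \<bar>z\<bar> * ((A + B) * \<bar>z\<bar> powr (-(\<alpha>+1)))"
        by (intro mult_left_mono sd_le assms) auto
      also have "\<bar>z\<bar> * \<bar>z\<bar> powr (-(\<alpha>+1)) = \<bar>z\<bar> powr (-\<alpha>)"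
      proof -
        have e: "-\<alpha> = 1 + (-(\<alpha>+1))" by simp
        have "\<bar>z\<bar> powr (-\<alpha>) = \<bar>z\<bar> powr 1 * \<bar>z\<bar> powr (-(\<alpha>+1))"
          by (simp only: e powr_add)
        then show ?thesis using z by simp
      qed
      then have "\<bar>z\<bar> * ((A + B) * \<bar>z\<bar> powr (-(\<alpha>+1))) = (A + B) * \<bar>z\<bar> powr (-\<alpha>)"
        by (simp add: algebra_simps)
      also have "\<dots> \<le> norm ((A + B) * (indicator {z. 1 \<le> \<bar>z\<bar>} z * \<bar>z\<bar> powr (-\<alpha>)))"
        using True by simp
      finally show ?thesis .
    qed simp
  qed
qed

lemma levy_eq_phi:
  assumes "1 < \<alpha>" "\<alpha> < 2" "A \<ge> 0" "B \<ge> 0"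
    and g: "\<gamma> + (LINT z|lborel. indicator {z. 1 \<le> \<bar>z\<bar>} z * z * stable_density \<alpha> A B z) = 0"
  shows "levy_exponent \<gamma> (stable_density \<alpha> A B) u = (CLINT z|lborel. phi \<alpha> A B u z)"
proof -
  let ?h = "\<lambda>z. indicator {z. 1 \<le> \<bar>z\<bar>} z * z * stable_density \<alpha> A B z"
  have eq: "(iexp (u * z) - 1 - \<i> * complex_of_real (u * z * indicator {z. \<bar>z\<bar> < 1} z)) * complex_of_real (stable_density \<alpha> A B z)
     = phi \<alpha> A B u z + (\<i> * complex_of_real u) * complex_of_real (?h z)" for z
    unfolding phi_def by (simp add: indicator_def algebra_simps)
  have i1: "integrable lborel (phi \<alpha> A B u)" by (rule phi_int) (use assms in auto)
  have i2: "integrable lborel (\<lambda>z. (\<i> * complex_of_real u) * complex_of_real (?h z))"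
    by (intro Bochner_Integration.integrable_mult_right integrable_of_real h_int) (use assms in auto)
  have "levy_exponent \<gamma> (stable_density \<alpha> A B) u
     = \<i> * complex_of_real (\<gamma> * u) + ((CLINT z|lborel. phi \<alpha> A B u z) + (\<i> * complex_of_real u) * complex_of_real (LINT z|lborel. ?h z))"
    unfolding levy_exponent_def eq
    by (subst Bochner_Integration.integral_add[OF i1 i2]) (simp only: integral_mult_right_zero integral_complex_of_real)
  also have "\<dots> = (CLINT z|lborel. phi \<alpha> A B u z) + \<i> * complex_of_real (u * (\<gamma> + (LINT z|lborel. ?h z)))"
    by (simp add: algebra_simps)
  also have "\<dots> = (CLINT z|lborel. phi \<alpha> A B u z)" using g by simp
  finally show ?thesis .
qed

lemma phi_scale:
  assumes "l > 0"
  shows "(CLINT z|lborel. phi \<alpha> A B (l * u) z) = complex_of_real (l powr \<alpha>) * (CLINT z|lborel. phi \<alpha> A B u z)"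
proof -
  have "(CLINT z|lborel. phi \<alpha> A B (l * u) z) = \<bar>1/l\<bar> *\<^sub>R (CLINT x|lborel. phi \<alpha> A B (l * u) (0 + 1/l * x))"
    by (rule lborel_integral_real_affine) (use assms in auto)
  also have "(\<lambda>x. phi \<alpha> A B (l * u) (0 + 1/l * x)) = (\<lambda>x. complex_of_real (l powr (\<alpha>+1)) * phi \<alpha> A B u x)"
  proof
    fix x
    have s: "stable_density \<alpha> A B (0 + 1/l * x) = l powr (\<alpha> + 1) * stable_density \<alpha> A B x"
      using sd_scale[OF assms, of \<alpha> A B x] by simp
    have m: "l * u * (0 + 1/l * x) = u * x" using assms by simp
    show "phi \<alpha> A B (l * u) (0 + 1/l * x) = complex_of_real (l powr (\<alpha>+1)) * phi \<alpha> A B u x"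
      unfolding phi_def s m by simp
  qed
  also have "\<bar>1/l\<bar> *\<^sub>R (CLINT x|lborel. complex_of_real (l powr (\<alpha>+1)) * phi \<alpha> A B u x)
      = complex_of_real (l powr (\<alpha>+1) / l) * (CLINT z|lborel. phi \<alpha> A B u z)"
    using assms by (simp add: scaleR_conv_of_real)
  also have "l powr (\<alpha>+1) / l = l powr \<alpha>"
    using assms by (simp add: powr_add)
  finally show ?thesis .
qed

lemma levy_scale:
  assumes "1 < \<alpha>" "\<alpha> < 2" "A \<ge> 0" "B \<ge> 0"
    and g: "\<gamma> + (LINT z|lborel. indicator {z. 1 \<le> \<bar>z\<bar>} z * z * stable_density \<alpha> A B z) = 0"
    and "c > 0"
  shows "levy_exponent \<gamma> (stable_density \<alpha> A B) (c powr (1/\<alpha>) * u) = complex_of_real c * levy_exponent \<gamma> (stable_density \<alpha> A B) u"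
proof -
  have "(c powr (1/\<alpha>)) powr \<alpha> = c" using assms by (simp add: powr_powr)
  then show ?thesis
    unfolding levy_eq_phi[OF assms(1-5)] using phi_scale[of "c powr (1/\<alpha>)" \<alpha> A B u] assms(6)
    by simp
qed

lemma Z_scale:
  assumes "1 < \<alpha>" "\<alpha> < 2" "A \<ge> 0" "B \<ge> 0"
    and g: "\<gamma> + (LINT z|lborel. indicator {z. 1 \<le> \<bar>z\<bar>} z * z * stable_density \<alpha> A B z) = 0"
    and P: "prob_space M" and L: "levy_process M Z \<gamma> (stable_density \<alpha> A B)"
    and c: "c \<ge> 0"
  shows "distr M borel (Z c) = distr M borel (\<lambda>\<omega>. c powr (1/\<alpha>) * Z 1 \<omega>)"
proof (cases "c = 0")
  case True
  have "Z 0 = (\<lambda>\<omega>. 0)" using L unfolding levy_process_def by auto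
  then show ?thesis using True by simp
next
  case False
  interpret prob_space M by fact
  have m: "Z t \<in> borel_measurable M" if "t \<ge> 0" for t using L that unfolding levy_process_def by auto
  have ch: "char (distr M borel (Z t)) u = exp (complex_of_real t * levy_exponent \<gamma> (stable_density \<alpha> A B) u)"
    if "t \<ge> 0" for t u using L that unfolding levy_process_def by auto
  have m1[measurable]: "Z 1 \<in> borel_measurable M" by (rule m) simp
  show ?thesis
  proof (rule Levy_uniqueness)
    show "real_distribution (distr M borel (Z c))" using m[OF c] by simp
    show "real_distribution (distr M borel (\<lambda>\<omega>. c powr (1/\<alpha>) * Z 1 \<omega>))" by simp
    show "char (distr M borel (Z c)) = char (distr M borel (\<lambda>\<omega>. c powr (1/\<alpha>) * Z 1 \<omega>))"
    proof
      fix u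
      have "char (distr M borel (\<lambda>\<omega>. c powr (1/\<alpha>) * Z 1 \<omega>)) u = (CLINT \<omega>|M. iexp (u * (c powr (1/\<alpha>) * Z 1 \<omega>)))"
        unfolding char_def by (rule integral_distr) auto
      also have "\<dots> = (CLINT \<omega>|M. iexp ((c powr (1/\<alpha>) * u) * Z 1 \<omega>))"
        by (simp add: ac_simps)
      also have "\<dots> = char (distr M borel (Z 1)) (c powr (1/\<alpha>) * u)"
        unfolding char_def by (rule integral_distr[symmetric]) auto
      also have "\<dots> = exp (levy_exponent \<gamma> (stable_density \<alpha> A B) (c powr (1/\<alpha>) * u))"
        using ch[of 1] by simp
      also have "\<dots> = char (distr M borel (Z c)) u"
        using ch[OF c] levy_scale[OF assms(1-5)] False c by simp
      finally show "char (distr M borel (Z c)) u = char (distr M borel (\<lambda>\<omega>. c powr (1/\<alpha>) * Z 1 \<omega>)) u" ..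
    qed
  qed
qed




lemma indep_pair_incr:
  assumes P: "prob_space M" and L: "levy_process M Z \<gamma> f" and c: "c \<ge> 1"
  shows "distr M (borel \<Otimes>\<^sub>M borel) (\<lambda>\<omega>. (Z 1 \<omega>, Z c \<omega> - Z 1 \<omega>))
       = distr M borel (Z 1) \<Otimes>\<^sub>M distr M borel (\<lambda>\<omega>. Z c \<omega> - Z 1 \<omega>)"
proof -
  interpret prob_space M by fact
  have m: "Z t \<in> borel_measurable M" if "t \<ge> 0" for t using L that unfolding levy_process_def by auto
  have Z0: "Z 0 \<omega> = 0" for \<omega> using L unfolding levy_process_def by auto
  have m1[measurable]: "Z 1 \<in> borel_measurable M" by (rule m) simp
  have mc[measurable]: "Z c \<in> borel_measurable M" by (rule m) (use c in simp)
  interpret D1: prob_space "distr M borel (Z 1)" by (rule prob_space_distr) simp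
  interpret D2: prob_space "distr M borel (\<lambda>\<omega>. Z c \<omega> - Z 1 \<omega>)" by (rule prob_space_distr) simp
  have key: "prob ((\<lambda>\<omega>. (Z 1 \<omega>, Z c \<omega> - Z 1 \<omega>)) -` (X \<times> Y) \<inter> space M)
      = prob (Z 1 -` X \<inter> space M) * prob ((\<lambda>\<omega>. Z c \<omega> - Z 1 \<omega>) -` Y \<inter> space M)"
    if X: "X \<in> sets borel" and Y: "Y \<in> sets borel" for X Y
  proof (cases "c = 1")
    case True
    show ?thesis
    proof (cases "0 \<in> Y")
      case True
      then have "(\<lambda>\<omega>. Z c \<omega> - Z 1 \<omega>) -` Y \<inter> space M = space M" using \<open>c = 1\<close> by auto
      moreover have "(\<lambda>\<omega>. (Z 1 \<omega>, Z c \<omega> - Z 1 \<omega>)) -` (X \<times> Y) \<inter> space M = Z 1 -` X \<inter> space M"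
        using True \<open>c = 1\<close> by auto
      ultimately show ?thesis by (simp add: prob_space)
    next
      case False
      then have "(\<lambda>\<omega>. Z c \<omega> - Z 1 \<omega>) -` Y \<inter> space M = {}" using \<open>c = 1\<close> by auto
      moreover have "(\<lambda>\<omega>. (Z 1 \<omega>, Z c \<omega> - Z 1 \<omega>)) -` (X \<times> Y) \<inter> space M = {}"
        using False \<open>c = 1\<close> by auto
      ultimately show ?thesis by simp
    qed
  next
    case False
    define ts where "ts = (\<lambda>i::nat. if i = 0 then 0 else if i = 1 then 1 else c)"
    have "indep_increments M Z" using L unfolding levy_process_def by auto
    then have I: "indep_vars (\<lambda>_. borel) (\<lambda>i \<omega>. Z (ts (Suc i)) \<omega> - Z (ts i) \<omega>) {..<2}"
      unfolding indep_increments_def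
      apply (elim allE[of _ 2] allE[of _ ts])
      using c False by (auto simp: ts_def less_Suc_eq)
    define A where "A = (\<lambda>i::nat. if i = 0 then X else Y)"
    have "prob (\<Inter>i\<in>{0,1}. (\<lambda>i \<omega>. Z (ts (Suc i)) \<omega> - Z (ts i) \<omega>) i -` A i \<inter> space M)
        = (\<Prod>i\<in>{0,1}. prob ((\<lambda>i \<omega>. Z (ts (Suc i)) \<omega> - Z (ts i) \<omega>) i -` A i \<inter> space M))"
      by (rule indep_varsD[OF I]) (auto simp: A_def X Y)
    then have "prob {x \<in> space M. Z 1 x \<in> X \<and> x \<in> space M \<and> Z c x - Z 1 x \<in> Y} =
     prob {x \<in> space M. Z 1 x \<in> X} * prob {x \<in> space M. Z c x - Z 1 x \<in> Y}"
      by (simp add: A_def ts_def Z0 Int_def conj_commute)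
    moreover have "{x \<in> space M. Z 1 x \<in> X \<and> x \<in> space M \<and> Z c x - Z 1 x \<in> Y}
       = {x \<in> space M. Z 1 x \<in> X \<and> Z c x - Z 1 x \<in> Y}" by auto
    ultimately show ?thesis by (simp add: vimage_def Int_def conj_commute)
  qed
  show ?thesis
  proof (rule pair_measure_eqI[symmetric])
    show "sigma_finite_measure (distr M borel (Z 1))" by unfold_locales
    show "sigma_finite_measure (distr M borel (\<lambda>\<omega>. Z c \<omega> - Z 1 \<omega>))" by unfold_locales
    show "sets (distr M borel (Z 1) \<Otimes>\<^sub>M distr M borel (\<lambda>\<omega>. Z c \<omega> - Z 1 \<omega>)) =
      sets (distr M (borel \<Otimes>\<^sub>M borel) (\<lambda>\<omega>. (Z 1 \<omega>, Z c \<omega> - Z 1 \<omega>)))"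
    proof -
      have s1: "sets (distr M borel (Z 1)) = sets borel" by simp
      have s2: "sets (distr M borel (\<lambda>\<omega>. Z c \<omega> - Z 1 \<omega>)) = sets borel" by simp
      show ?thesis unfolding sets_pair_measure_cong[OF s1 s2] sets_distr ..
    qed
    fix X Y assume X: "X \<in> sets (distr M borel (Z 1))" and Y: "Y \<in> sets (distr M borel (\<lambda>\<omega>. Z c \<omega> - Z 1 \<omega>))"
    then have X': "X \<in> sets borel" and Y': "Y \<in> sets borel" by auto
    show "emeasure (distr M borel (Z 1)) X * emeasure (distr M borel (\<lambda>\<omega>. Z c \<omega> - Z 1 \<omega>)) Y =
       emeasure (distr M (borel \<Otimes>\<^sub>M borel) (\<lambda>\<omega>. (Z 1 \<omega>, Z c \<omega> - Z 1 \<omega>))) (X \<times> Y)"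
    proof -
      have XY: "X \<times> Y \<in> sets (borel \<Otimes>\<^sub>M borel)" using X' Y' by auto
      have "emeasure (distr M (borel \<Otimes>\<^sub>M borel) (\<lambda>\<omega>. (Z 1 \<omega>, Z c \<omega> - Z 1 \<omega>))) (X \<times> Y)
         = ennreal (prob ((\<lambda>\<omega>. (Z 1 \<omega>, Z c \<omega> - Z 1 \<omega>)) -` (X \<times> Y) \<inter> space M))"
        by (subst emeasure_distr[OF _ XY]) (simp_all add: emeasure_eq_measure)
      also have "\<dots> = ennreal (prob (Z 1 -` X \<inter> space M)) * ennreal (prob ((\<lambda>\<omega>. Z c \<omega> - Z 1 \<omega>) -` Y \<inter> space M))"
        unfolding key[OF X' Y'] by (rule ennreal_mult) simp_all
      also have "\<dots> = emeasure (distr M borel (Z 1)) X * emeasure (distr M borel (\<lambda>\<omega>. Z c \<omega> - Z 1 \<omega>)) Y"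
        using X' Y' by (simp add: emeasure_distr emeasure_eq_measure)
      finally show ?thesis by simp
    qed
  qed
qed




lemma pair_law:
  assumes "1 < \<alpha>" "\<alpha> < 2" "A \<ge> 0" "B \<ge> 0"
    and g: "\<gamma> + (LINT z|lborel. indicator {z. 1 \<le> \<bar>z\<bar>} z * z * stable_density \<alpha> A B z) = 0"
    and P: "prob_space M" and L: "levy_process M Z \<gamma> (stable_density \<alpha> A B)"
    and c: "c \<ge> 1"
  shows "distr M (borel \<Otimes>\<^sub>M borel) (\<lambda>\<omega>. (Z 1 \<omega>, Z c \<omega>))
       = distr (distr M borel (Z 1) \<Otimes>\<^sub>M distr M borel (Z 1)) (borel \<Otimes>\<^sub>M borel)
           (\<lambda>(x, y). (x, x + (c - 1) powr (1/\<alpha>) * y))"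
proof -
  interpret prob_space M by fact
  have m: "Z t \<in> borel_measurable M" if "t \<ge> 0" for t using L that unfolding levy_process_def by auto
  have Z0: "Z 0 \<omega> = 0" for \<omega> using L unfolding levy_process_def by auto
  have m1[measurable]: "Z 1 \<in> borel_measurable M" by (rule m) simp
  have mc[measurable]: "Z c \<in> borel_measurable M" by (rule m) (use c in simp)
  let ?DZ = "distr M borel (Z 1)"
  let ?g = "\<lambda>y. (c - 1) powr (1/\<alpha>) * y"
  interpret DZ: prob_space ?DZ by (rule prob_space_distr) simp
  interpret DZ2: pair_prob_space ?DZ ?DZ ..
  have st: "stationary_increments M Z" using L unfolding levy_process_def by auto
  have "distr M borel (\<lambda>\<omega>. Z (1 + (c - 1)) \<omega> - Z 1 \<omega>) = distr M borel (\<lambda>\<omega>. Z (c - 1) \<omega> - Z 0 \<omega>)"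
    by (rule mp[OF mp[OF spec[OF spec[OF st[unfolded stationary_increments_def], of 1], of "c - 1"]]]) (use c in auto)
  then have W: "distr M borel (\<lambda>\<omega>. Z c \<omega> - Z 1 \<omega>) = distr M borel (Z (c - 1))"
    by (simp add: Z0)
  also have "\<dots> = distr M borel (\<lambda>\<omega>. ?g (Z 1 \<omega>))"
    by (rule Z_scale[OF assms(1-7)]) (use c in simp)
  also have "\<dots> = distr ?DZ borel ?g"
    by (subst distr_distr) (auto simp: comp_def)
  finally have W': "distr M borel (\<lambda>\<omega>. Z c \<omega> - Z 1 \<omega>) = distr ?DZ borel ?g" .
  have "distr M (borel \<Otimes>\<^sub>M borel) (\<lambda>\<omega>. (Z 1 \<omega>, Z c \<omega> - Z 1 \<omega>)) = ?DZ \<Otimes>\<^sub>M distr ?DZ borel ?g"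
    using indep_pair_incr[OF P L c] W' by simp
  also have "\<dots> = distr ?DZ borel (\<lambda>x. x) \<Otimes>\<^sub>M distr ?DZ borel ?g"
    by (simp add: distr_id2)
  also have "\<dots> = distr (?DZ \<Otimes>\<^sub>M ?DZ) (borel \<Otimes>\<^sub>M borel) (\<lambda>(x, y). (x, ?g y))"
  proof (rule pair_measure_distr)
    show "(\<lambda>x. x) \<in> measurable ?DZ borel" by (simp add: measurable_ident_sets)
    show "?g \<in> measurable ?DZ borel" by simp
    interpret D3: prob_space "distr ?DZ borel ?g" by (rule DZ.prob_space_distr) simp
    show "sigma_finite_measure (distr ?DZ borel ?g)" by unfold_locales
  qed
  finally have J: "distr M (borel \<Otimes>\<^sub>M borel) (\<lambda>\<omega>. (Z 1 \<omega>, Z c \<omega> - Z 1 \<omega>))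
     = distr (?DZ \<Otimes>\<^sub>M ?DZ) (borel \<Otimes>\<^sub>M borel) (\<lambda>(x, y). (x, ?g y))" .
  let ?h = "\<lambda>(x::real, w::real). (x, x + w)"
  have hm: "?h \<in> measurable (borel \<Otimes>\<^sub>M borel) (borel \<Otimes>\<^sub>M borel)" by simp
  have "distr M (borel \<Otimes>\<^sub>M borel) (\<lambda>\<omega>. (Z 1 \<omega>, Z c \<omega>))
      = distr (distr M (borel \<Otimes>\<^sub>M borel) (\<lambda>\<omega>. (Z 1 \<omega>, Z c \<omega> - Z 1 \<omega>))) (borel \<Otimes>\<^sub>M borel) ?h"
    by (subst distr_distr[OF hm]) (auto simp: comp_def)
  also have "\<dots> = distr (distr (?DZ \<Otimes>\<^sub>M ?DZ) (borel \<Otimes>\<^sub>M borel) (\<lambda>(x, y). (x, ?g y))) (borel \<Otimes>\<^sub>M borel) ?h"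
    unfolding J ..
  also have "\<dots> = distr (?DZ \<Otimes>\<^sub>M ?DZ) (borel \<Otimes>\<^sub>M borel) (?h \<circ> (\<lambda>(x, y). (x, ?g y)))"
  proof (rule distr_distr[OF hm])
    have "(\<lambda>(x, y). (x, ?g y)) \<in> measurable (borel \<Otimes>\<^sub>M borel) (borel \<Otimes>\<^sub>M borel)" by simp
    then show "(\<lambda>(x, y). (x, ?g y)) \<in> measurable (?DZ \<Otimes>\<^sub>M ?DZ) (borel \<Otimes>\<^sub>M borel)"
    proof -
      have se: "sets (?DZ \<Otimes>\<^sub>M ?DZ) = sets (borel \<Otimes>\<^sub>M borel)" by (rule sets_pair_measure_cong) simp_all
      show ?thesis unfolding measurable_cong_sets[OF se refl] by fact
    qed
  qed
  also have "?h \<circ> (\<lambda>(x, y). (x, ?g y)) = (\<lambda>(x, y). (x, x + ?g y))"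
    by (auto simp: fun_eq_iff)
  finally show ?thesis .
qed




definition apx :: "nat \<Rightarrow> real \<Rightarrow> real" where
  "apx n c = max 0 ((of_int \<lfloor>c * 2^n\<rfloor> + 1) / 2^n)"

definition ev :: "(real \<Rightarrow> real) \<Rightarrow> real \<Rightarrow> real" where
  "ev f c = lim (\<lambda>n. f (apx n c))"

lemma apx_bounds:
  assumes "c \<ge> 0"
  shows "c < apx n c" "apx n c \<le> c + 1 / 2^n"
proof -
  have p: "(0::real) < 2^n" by simp
  have a: "c * 2^n < of_int \<lfloor>c * 2^n\<rfloor> + 1" by linarith
  have b: "of_int \<lfloor>c * 2^n\<rfloor> \<le> c * 2^n" by linarith
  have a': "c < (of_int \<lfloor>c * 2^n\<rfloor> + 1) / 2^n" using a p by (simp add: field_simps)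
  have b': "(of_int \<lfloor>c * 2^n\<rfloor> + 1) / 2^n \<le> c + 1 / 2^n" using b p by (simp add: field_simps)
  show "c < apx n c" using a' unfolding apx_def by simp
  show "apx n c \<le> c + 1 / 2^n" using b' assms a' unfolding apx_def by simp
qed

lemma apx_nonneg: "apx n c \<ge> 0" unfolding apx_def by simp

lemma apx_tendsto:
  assumes "c \<ge> 0"
  shows "filterlim (\<lambda>n. apx n c) (at_right c) sequentially"
  unfolding filterlim_at
proof
  show "\<forall>\<^sub>F n in sequentially. apx n c \<in> {c<..} \<and> apx n c \<noteq> c"
    using apx_bounds(1)[OF assms] by (auto intro!: always_eventually) (metis less_irrefl)
  have "(\<lambda>n. c + (1/2) ^ n) \<longlonglongrightarrow> c + 0"
    by (intro tendsto_add tendsto_const LIMSEQ_realpow_zero) auto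
  then have h: "(\<lambda>n. c + 1 / 2 ^ n) \<longlonglongrightarrow> c" by (simp add: power_one_over)
  show "(\<lambda>n. apx n c) \<longlonglongrightarrow> c"
    by (rule tendsto_sandwich[OF _ _ tendsto_const h])
       (use apx_bounds[OF assms] in \<open>auto intro!: always_eventually less_imp_le\<close>)
qed

lemma ev_cadlag:
  assumes "cadlag_paths Z" "c \<ge> 0"
  shows "ev (\<lambda>r. Z r \<omega>) c = Z c \<omega>"
proof -
  have "((\<lambda>r. Z r \<omega>) \<longlongrightarrow> Z c \<omega>) (at_right c)"
    using assms unfolding cadlag_paths_def by auto
  from filterlim_compose[OF this apx_tendsto[OF assms(2)]]
  show ?thesis unfolding ev_def by (rule limI)
qed

lemma ev_path:
  assumes "cadlag_paths Z" "c \<ge> 0"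
  shows "ev (path Z \<omega>) c = Z c \<omega>"
proof -
  have "ev (path Z \<omega>) c = ev (\<lambda>r. Z r \<omega>) c"
    unfolding ev_def path_def using apx_nonneg by simp
  then show ?thesis using ev_cadlag[OF assms] by simp
qed

lemma ev_meas:
  assumes F: "\<And>x. x \<ge> 0 \<Longrightarrow> (\<lambda>k. F k x) \<in> borel_measurable K"
    and T[measurable]: "T \<in> borel_measurable K"
  shows "(\<lambda>k. ev (F k) (T k)) \<in> borel_measurable K"
  unfolding ev_def
proof (rule borel_measurable_lim_metric)
  fix n
  let ?G = "\<lambda>i::int. max 0 ((of_int i + 1) / 2^n :: real)"
  have "(\<lambda>k. F k (?G (\<lfloor>T k * 2^n\<rfloor>)) ) \<in> borel_measurable K"
  proof (rule measurable_compose_countable[where f="\<lambda>i k. F k (?G i)"])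
    show "(\<lambda>k. F k (?G i)) \<in> borel_measurable K" for i by (rule F) simp
    show "(\<lambda>k. \<lfloor>T k * 2^n\<rfloor>) \<in> measurable K (count_space UNIV)" by measurable
  qed
  then show "(\<lambda>k. F k (apx n (T k))) \<in> borel_measurable K" unfolding apx_def .
qed

lemma Z_rand_meas:
  assumes "cadlag_paths Z" "\<And>t. t \<ge> 0 \<Longrightarrow> Z t \<in> borel_measurable M"
    and "T \<in> borel_measurable M" "\<And>\<omega>. T \<omega> \<ge> 0"
  shows "(\<lambda>\<omega>. Z (T \<omega>) \<omega>) \<in> borel_measurable M"
proof -
  have "(\<lambda>\<omega>. ev (\<lambda>r. Z r \<omega>) (T \<omega>)) \<in> borel_measurable M"
    by (rule ev_meas) (use assms in auto)
  moreover have "(\<lambda>\<omega>. ev (\<lambda>r. Z r \<omega>) (T \<omega>)) = (\<lambda>\<omega>. Z (T \<omega>) \<omega>)"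
    using ev_cadlag[OF assms(1) assms(4)] by auto
  ultimately show ?thesis by simp
qed




lemma pair_perm:
  fixes A B C :: "real measure"
  assumes PA: "prob_space A" and PB: "prob_space B" and PC: "prob_space C"
    and sA: "sets A = sets borel" and sB: "sets B = sets borel" and sC: "sets C = sets borel"
  shows "A \<Otimes>\<^sub>M (B \<Otimes>\<^sub>M C) = distr (B \<Otimes>\<^sub>M (A \<Otimes>\<^sub>M C)) (borel \<Otimes>\<^sub>M (borel \<Otimes>\<^sub>M borel)) (\<lambda>(b, a, c). (a, b, c))"
proof (rule pair_measure_eqI)
  interpret A: prob_space A by fact
  interpret B: prob_space B by fact
  interpret C: prob_space C by fact
  interpret BC: pair_prob_space B C ..
  interpret AC: pair_prob_space A C ..
  interpret BAC: pair_prob_space B "A \<Otimes>\<^sub>M C" ..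
  show "sigma_finite_measure A" ..
  show "sigma_finite_measure (B \<Otimes>\<^sub>M C)" ..
  have s1: "sets (B \<Otimes>\<^sub>M C) = sets (borel \<Otimes>\<^sub>M borel)" by (rule sets_pair_measure_cong) (simp_all add: sB sC)
  have s2: "sets (A \<Otimes>\<^sub>M C) = sets (borel \<Otimes>\<^sub>M borel)" by (rule sets_pair_measure_cong) (simp_all add: sA sC)
  have s3: "sets (A \<Otimes>\<^sub>M (B \<Otimes>\<^sub>M C)) = sets (borel \<Otimes>\<^sub>M (borel \<Otimes>\<^sub>M borel))"
    by (rule sets_pair_measure_cong) (simp_all add: sA s1)
  have s4: "sets (B \<Otimes>\<^sub>M (A \<Otimes>\<^sub>M C)) = sets (borel \<Otimes>\<^sub>M (borel \<Otimes>\<^sub>M borel))"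
    by (rule sets_pair_measure_cong) (simp_all add: sB s2)
  show "sets (A \<Otimes>\<^sub>M (B \<Otimes>\<^sub>M C)) = sets (distr (B \<Otimes>\<^sub>M (A \<Otimes>\<^sub>M C)) (borel \<Otimes>\<^sub>M (borel \<Otimes>\<^sub>M borel)) (\<lambda>(b, a, c). (a, b, c)))"
    using s3 by simp
  have pm0: "(\<lambda>(b::real, a::real, c::real). (a, b, c)) \<in> measurable (borel \<Otimes>\<^sub>M (borel \<Otimes>\<^sub>M borel)) (borel \<Otimes>\<^sub>M (borel \<Otimes>\<^sub>M borel))"
    by simp
  have pm: "(\<lambda>(b::real, a::real, c::real). (a, b, c)) \<in> measurable (B \<Otimes>\<^sub>M (A \<Otimes>\<^sub>M C)) (borel \<Otimes>\<^sub>M (borel \<Otimes>\<^sub>M borel))"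
    unfolding measurable_cong_sets[OF s4 refl] by (rule pm0)
  fix X W assume X: "X \<in> sets A" and W: "W \<in> sets (B \<Otimes>\<^sub>M C)"
  have XW: "X \<times> W \<in> sets (borel \<Otimes>\<^sub>M (borel \<Otimes>\<^sub>M borel))"
    using X W s1 sA by auto
  have Xs: "X \<subseteq> space A" using X by (rule sets.sets_into_space)
  have Ws: "W \<subseteq> space B \<times> space C" using sets.sets_into_space[OF W] by (simp add: space_pair_measure)
  let ?V = "(\<lambda>(b, a, c). (a, b, c)) -` (X \<times> W) \<inter> space (B \<Otimes>\<^sub>M (A \<Otimes>\<^sub>M C))"
  have V: "?V \<in> sets (B \<Otimes>\<^sub>M (A \<Otimes>\<^sub>M C))" using pm XW by (rule measurable_sets)
  have sl: "Pair b -` ?V = X \<times> (Pair b -` W)" if b: "b \<in> space B" for b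
    using b Xs Ws by (auto simp: space_pair_measure)
  have "emeasure (distr (B \<Otimes>\<^sub>M (A \<Otimes>\<^sub>M C)) (borel \<Otimes>\<^sub>M (borel \<Otimes>\<^sub>M borel)) (\<lambda>(b, a, c). (a, b, c))) (X \<times> W)
      = emeasure (B \<Otimes>\<^sub>M (A \<Otimes>\<^sub>M C)) ?V"
    by (rule emeasure_distr[OF pm XW])
  also have "\<dots> = (\<integral>\<^sup>+b. emeasure (A \<Otimes>\<^sub>M C) (Pair b -` ?V) \<partial>B)"
    by (rule AC.emeasure_pair_measure_alt[OF V])
  also have "\<dots> = (\<integral>\<^sup>+b. emeasure A X * emeasure C (Pair b -` W) \<partial>B)"
  proof (rule nn_integral_cong)
    fix b assume b: "b \<in> space B"
    have "Pair b -` W \<in> sets C" using W by (rule sets_Pair1)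
    then show "emeasure (A \<Otimes>\<^sub>M C) (Pair b -` ?V) = emeasure A X * emeasure C (Pair b -` W)"
      unfolding sl[OF b] by (rule C.emeasure_pair_measure_Times[OF X])
  qed
  also have "\<dots> = emeasure A X * (\<integral>\<^sup>+b. emeasure C (Pair b -` W) \<partial>B)"
    by (rule nn_integral_cmult) (rule C.measurable_emeasure_Pair[OF W])
  also have "\<dots> = emeasure A X * emeasure (B \<Otimes>\<^sub>M C) W"
    by (simp add: C.emeasure_pair_measure_alt[OF W])
  finally show "emeasure A X * emeasure (B \<Otimes>\<^sub>M C) W =
     emeasure (distr (B \<Otimes>\<^sub>M (A \<Otimes>\<^sub>M C)) (borel \<Otimes>\<^sub>M (borel \<Otimes>\<^sub>M borel)) (\<lambda>(b, a, c). (a, b, c))) (X \<times> W)" by simp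
qed




theorem proposition4p5:
  fixes \<alpha> \<kappa> A B \<gamma> :: real
    and M :: "'a measure" and Z \<zeta> :: "real \<Rightarrow> 'a \<Rightarrow> real" and \<psi> :: "real \<Rightarrow> real"
    and N :: "'b measure" and X :: "real \<Rightarrow> 'b \<Rightarrow> real"
    and s t :: real
  assumes "1 < \<alpha>" "\<alpha> < 2" and "A > 0" "B > 0"
    and "prob_space M" "prob_space N"
    and "levy_process M Z \<gamma> (stable_density \<alpha> A B)"
    and "\<gamma> + (LINT z|lborel. indicator {z. 1 \<le> \<bar>z\<bar>} z * z * stable_density \<alpha> A B z) = 0"
    and "\<kappa> = 1 / \<alpha>"
    and "subordinator M \<zeta> \<psi>" and "\<psi> \<kappa> = \<kappa>"
    and "prob_space.indep_var M (Pi\<^sub>M {0..} (\<lambda>_. borel)) (path Z) (Pi\<^sub>M {0..} (\<lambda>_. borel)) (path \<zeta>)"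
    and "associated_process \<kappa> M Z \<zeta> N X"
    and "0 < s" "s \<le> t"
  shows "distr N (borel \<Otimes>\<^sub>M borel) (\<lambda>\<omega>. (X s \<omega>, X t \<omega>)) =
         distr (distr N borel (X s) \<Otimes>\<^sub>M
                (distr M borel (\<lambda>\<omega>. exp (- \<zeta> (ln (t / s)) \<omega>)) \<Otimes>\<^sub>M distr M borel (Z 1)))
               (borel \<Otimes>\<^sub>M borel)
               (\<lambda>(x, r, y). (x, (t / s) powr \<kappa> * (r powr \<kappa> * x + s powr \<kappa> * (1 - r) powr \<kappa> * y)))"
proof -
  note a1 = assms(1,2) and AB = assms(3,4) and PM = assms(5) and PN = assms(6)
  note Lev = assms(7) and gam = assms(8) and kap = assms(9) and sub = assms(10)
  note ind = assms(12) and asp = assms(13) and s0 = assms(14) and st = assms(15)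
  interpret prob_space M by fact
  interpret N: prob_space N by fact
  have Zm[measurable]: "Z u \<in> borel_measurable M" if "u \<ge> 0" for u using Lev that unfolding levy_process_def by auto
  have Z0: "Z 0 \<omega> = 0" for \<omega> using Lev unfolding levy_process_def by auto
  have cad: "cadlag_paths Z" using Lev unfolding levy_process_def by auto
  have zm[measurable]: "\<zeta> u \<in> borel_measurable M" if "u \<ge> 0" for u using sub that unfolding subordinator_def by auto
  have z0: "\<zeta> 0 \<omega> = 0" for \<omega> using sub unfolding subordinator_def by auto
  have znn: "\<zeta> u \<omega> \<ge> 0" if "u \<ge> 0" for u \<omega> using sub that unfolding subordinator_def by auto
  have Xm[measurable]: "X u \<in> borel_measurable N" if "u \<ge> 0" for u using asp that unfolding associated_process_def by auto
  have t0: "t > 0" using s0 st by simp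
  define L where "L = ln (t / s)"
  have L0: "L \<ge> 0" unfolding L_def using s0 st by simp
  have Lst: "- ln s + ln t = L" "ln t - ln s = L" unfolding L_def using s0 t0 by (simp_all add: ln_div)
  have Zm1[measurable]: "Z 1 \<in> borel_measurable M" by (rule Zm) simp
  have zmL[measurable]: "\<zeta> L \<in> borel_measurable M" by (rule zm[OF L0])
  have ZT: "(\<lambda>\<omega>. Z (exp (\<zeta> b \<omega>)) \<omega>) \<in> borel_measurable M" if "b \<ge> 0" for b
    by (rule Z_rand_meas[OF cad Zm]) (use zm[OF that] in auto)
  define Y where "Y = (\<lambda>\<omega>. (s powr \<kappa> * Z 1 \<omega>, t powr \<kappa> * exp (-\<kappa> * \<zeta> L \<omega>) * Z (exp (\<zeta> L \<omega>)) \<omega>))"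
  have ZTL[measurable]: "(\<lambda>\<omega>. Z (exp (\<zeta> L \<omega>)) \<omega>) \<in> borel_measurable M" by (rule ZT[OF L0])
  have em: "(\<lambda>\<omega>. exp (-\<kappa> * \<zeta> L \<omega>)) \<in> borel_measurable M" by measurable
  have Ym[measurable]: "Y \<in> measurable M (borel \<Otimes>\<^sub>M borel)" unfolding Y_def
    by (intro measurable_Pair borel_measurable_times borel_measurable_const Zm1 ZTL em)

  have XY: "distr N (borel \<Otimes>\<^sub>M borel) (\<lambda>\<omega>. (X s \<omega>, X t \<omega>)) = distr M (borel \<Otimes>\<^sub>M borel) Y"
  proof -
    let ?J = "{s, t}"
    let ?PJ = "Pi\<^sub>M ?J (\<lambda>_. borel) :: (real \<Rightarrow> real) measure"
    let ?Xr = "\<lambda>\<omega>. \<lambda>u\<in>?J. X u \<omega>"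
    let ?Yr = "\<lambda>\<omega>. \<lambda>u\<in>?J. u powr \<kappa> * exp (- \<kappa> * \<zeta> (- ln s + ln u) \<omega>) * Z (exp (\<zeta> (- ln s + ln u) \<omega>)) \<omega>"
    have Jsub: "?J \<subseteq> {exp (- (- ln s))..}" using s0 st by auto
    have eq: "distr N ?PJ ?Xr = distr M ?PJ ?Yr"
    proof -
      have "\<forall>a J. finite J \<longrightarrow> J \<subseteq> {exp (- a)..} \<longrightarrow>
        distr N (Pi\<^sub>M J (\<lambda>_. borel)) (\<lambda>\<omega>. \<lambda>t\<in>J. X t \<omega>) =
        distr M (Pi\<^sub>M J (\<lambda>_. borel))
          (\<lambda>\<omega>. \<lambda>t\<in>J. t powr \<kappa> * exp (- \<kappa> * \<zeta> (a + ln t) \<omega>) * Z (exp (\<zeta> (a + ln t) \<omega>)) \<omega>)"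
        using asp unfolding associated_process_def by (elim conjE)
      from this[rule_format, OF _ Jsub] show ?thesis by simp
    qed
    have pr: "(\<lambda>f. (f s, f t)) \<in> measurable ?PJ (borel \<Otimes>\<^sub>M borel)"
      by (intro measurable_Pair measurable_component_singleton) auto
    have Xrm: "?Xr \<in> measurable N ?PJ"
      by (rule measurable_restrict) (use s0 st in auto)
    have Yrm: "?Yr \<in> measurable M ?PJ"
    proof (rule measurable_restrict)
      fix u assume u: "u \<in> ?J"
      then have b: "- ln s + ln u \<ge> 0" using s0 st by auto
      have [measurable]: "\<zeta> (- ln s + ln u) \<in> borel_measurable M" by (rule zm[OF b])
      have [measurable]: "(\<lambda>\<omega>. Z (exp (\<zeta> (- ln s + ln u) \<omega>)) \<omega>) \<in> borel_measurable M" by (rule ZT[OF b])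
      show "(\<lambda>\<omega>. u powr \<kappa> * exp (- \<kappa> * \<zeta> (- ln s + ln u) \<omega>) * Z (exp (\<zeta> (- ln s + ln u) \<omega>)) \<omega>) \<in> borel_measurable M"
        by measurable
    qed
    have "distr N (borel \<Otimes>\<^sub>M borel) (\<lambda>\<omega>. (X s \<omega>, X t \<omega>)) = distr N (borel \<Otimes>\<^sub>M borel) ((\<lambda>f. (f s, f t)) \<circ> ?Xr)"
      by (rule distr_cong) auto
    also have "\<dots> = distr (distr N ?PJ ?Xr) (borel \<Otimes>\<^sub>M borel) (\<lambda>f. (f s, f t))"
      by (rule distr_distr[symmetric, OF pr Xrm])
    also have "\<dots> = distr (distr M ?PJ ?Yr) (borel \<Otimes>\<^sub>M borel) (\<lambda>f. (f s, f t))"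
      unfolding eq ..
    also have "\<dots> = distr M (borel \<Otimes>\<^sub>M borel) ((\<lambda>f. (f s, f t)) \<circ> ?Yr)"
      by (rule distr_distr[OF pr Yrm])
    also have "\<dots> = distr M (borel \<Otimes>\<^sub>M borel) Y"
      by (rule distr_cong) (auto simp: Y_def z0 Lst)
    finally show ?thesis .
  qed

  have Ds: "distr N borel (X s) = distr M borel (\<lambda>\<omega>. s powr \<kappa> * Z 1 \<omega>)"
  proof -
    have pm: "(\<lambda>\<omega>. (X s \<omega>, X t \<omega>)) \<in> measurable N (borel \<Otimes>\<^sub>M borel)"
      by (intro measurable_Pair Xm) (use s0 t0 in auto)
    have "distr N borel (X s) = distr N borel (fst \<circ> (\<lambda>\<omega>. (X s \<omega>, X t \<omega>)))"
      by (rule distr_cong) auto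
    also have "\<dots> = distr (distr N (borel \<Otimes>\<^sub>M borel) (\<lambda>\<omega>. (X s \<omega>, X t \<omega>))) borel fst"
      by (rule distr_distr[symmetric]) (use pm in auto)
    also have "\<dots> = distr M borel (fst \<circ> Y)"
      unfolding XY by (rule distr_distr) auto
    also have "\<dots> = distr M borel (\<lambda>\<omega>. s powr \<kappa> * Z 1 \<omega>)"
      by (rule distr_cong) (auto simp: Y_def)
    finally show ?thesis .
  qed

  define DZ where "DZ = distr M borel (Z 1)"
  define DR where "DR = distr M borel (\<lambda>\<omega>. exp (- \<zeta> L \<omega>))"
  define G where "G = (\<lambda>(r::real, x::real, y::real). (s powr \<kappa> * x, t powr \<kappa> * (r powr \<kappa> * x + (1 - r) powr \<kappa> * y)))"
  define Q where "Q = distr (DR \<Otimes>\<^sub>M (DZ \<Otimes>\<^sub>M DZ)) (borel \<Otimes>\<^sub>M borel) G"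
  have sDZ: "sets DZ = sets borel" unfolding DZ_def by simp
  have sDR: "sets DR = sets borel" unfolding DR_def by simp
  interpret DZ: prob_space DZ unfolding DZ_def by (rule prob_space_distr) simp
  interpret DR: prob_space DR unfolding DR_def by (rule prob_space_distr) simp
  interpret ZZ: pair_prob_space DZ DZ ..
  interpret RZ: pair_prob_space DR DZ ..
  interpret RZZ: pair_prob_space DR "DZ \<Otimes>\<^sub>M DZ" ..
  have sZZ: "sets (DZ \<Otimes>\<^sub>M DZ) = sets (borel \<Otimes>\<^sub>M borel)" by (rule sets_pair_measure_cong) (simp_all add: sDZ)
  have sRZ: "sets (DR \<Otimes>\<^sub>M DZ) = sets (borel \<Otimes>\<^sub>M borel)" by (rule sets_pair_measure_cong) (simp_all add: sDZ sDR)
  have sRZZ: "sets (DR \<Otimes>\<^sub>M (DZ \<Otimes>\<^sub>M DZ)) = sets (borel \<Otimes>\<^sub>M (borel \<Otimes>\<^sub>M borel))"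
    by (rule sets_pair_measure_cong) (simp_all add: sDR sZZ)
  have Gm0: "G \<in> measurable (borel \<Otimes>\<^sub>M (borel \<Otimes>\<^sub>M borel)) (borel \<Otimes>\<^sub>M borel)"
    unfolding G_def by measurable
  have Gm: "G \<in> measurable (DR \<Otimes>\<^sub>M (DZ \<Otimes>\<^sub>M DZ)) (borel \<Otimes>\<^sub>M borel)"
    unfolding measurable_cong_sets[OF sRZZ refl] by (rule Gm0)

  have RHS: "distr (distr N borel (X s) \<Otimes>\<^sub>M (DR \<Otimes>\<^sub>M DZ)) (borel \<Otimes>\<^sub>M borel)
               (\<lambda>(x, r, y). (x, (t / s) powr \<kappa> * (r powr \<kappa> * x + s powr \<kappa> * (1 - r) powr \<kappa> * y))) = Q"
  proof -
    let ?F = "\<lambda>(x::real, r::real, y::real). (x, (t / s) powr \<kappa> * (r powr \<kappa> * x + s powr \<kappa> * (1 - r) powr \<kappa> * y))"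
    let ?sg = "\<lambda>x::real. s powr \<kappa> * x"
    let ?perm = "\<lambda>(b::real, a::real, c::real). (a, b, c)"
    let ?B3 = "borel \<Otimes>\<^sub>M (borel \<Otimes>\<^sub>M borel) :: (real \<times> real \<times> real) measure"
    have Ds': "distr N borel (X s) = distr DZ borel ?sg"
      unfolding Ds DZ_def by (subst distr_distr) (auto simp: comp_def)
    have "distr N borel (X s) \<Otimes>\<^sub>M (DR \<Otimes>\<^sub>M DZ) = distr DZ borel ?sg \<Otimes>\<^sub>M distr (DR \<Otimes>\<^sub>M DZ) (borel \<Otimes>\<^sub>M borel) (\<lambda>q. q)"
      unfolding Ds' using distr_id2[OF sRZ[symmetric]] by simp
    also have "\<dots> = distr (DZ \<Otimes>\<^sub>M (DR \<Otimes>\<^sub>M DZ)) ?B3 (\<lambda>(x, q). (?sg x, q))"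
    proof (rule pair_measure_distr)
      show "?sg \<in> measurable DZ borel" unfolding measurable_cong_sets[OF sDZ refl] by simp
      show "(\<lambda>q. q) \<in> measurable (DR \<Otimes>\<^sub>M DZ) (borel \<Otimes>\<^sub>M borel)"
        unfolding measurable_cong_sets[OF sRZ refl] by simp
      have "distr (DR \<Otimes>\<^sub>M DZ) (borel \<Otimes>\<^sub>M borel) (\<lambda>q. q) = DR \<Otimes>\<^sub>M DZ" by (rule distr_id2[OF sRZ[symmetric]])
      then show "sigma_finite_measure (distr (DR \<Otimes>\<^sub>M DZ) (borel \<Otimes>\<^sub>M borel) (\<lambda>q. q))"
        by (simp add: RZ.P.sigma_finite_measure_axioms)
    qed
    also have "DZ \<Otimes>\<^sub>M (DR \<Otimes>\<^sub>M DZ) = distr (DR \<Otimes>\<^sub>M (DZ \<Otimes>\<^sub>M DZ)) ?B3 ?perm"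
      by (rule pair_perm) (simp_all add: sDZ sDR DZ.prob_space_axioms DR.prob_space_axioms)
    finally have E1: "distr N borel (X s) \<Otimes>\<^sub>M (DR \<Otimes>\<^sub>M DZ) = distr (distr (DR \<Otimes>\<^sub>M (DZ \<Otimes>\<^sub>M DZ)) ?B3 ?perm) ?B3 (\<lambda>(x, q). (?sg x, q))" .
    have pm: "?perm \<in> measurable (DR \<Otimes>\<^sub>M (DZ \<Otimes>\<^sub>M DZ)) ?B3"
      unfolding measurable_cong_sets[OF sRZZ refl] by simp
    have sm: "(\<lambda>(x, q). (?sg x, q)) \<in> measurable ?B3 ?B3" by simp
    have Fm: "?F \<in> measurable ?B3 (borel \<Otimes>\<^sub>M borel)" by simp
    have "distr (distr N borel (X s) \<Otimes>\<^sub>M (DR \<Otimes>\<^sub>M DZ)) (borel \<Otimes>\<^sub>M borel) ?F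
       = distr (DR \<Otimes>\<^sub>M (DZ \<Otimes>\<^sub>M DZ)) (borel \<Otimes>\<^sub>M borel) (?F \<circ> ((\<lambda>(x, q). (?sg x, q)) \<circ> ?perm))"
      unfolding E1 by (simp add: distr_distr[OF Fm] distr_distr[OF sm pm] measurable_comp[OF pm sm])
    also have "?F \<circ> ((\<lambda>(x, q). (?sg x, q)) \<circ> ?perm) = G"
    proof -
      have sp: "s powr \<kappa> > 0" using s0 by simp
      have "(t / s) powr \<kappa> * (r powr \<kappa> * (s powr \<kappa> * x) + s powr \<kappa> * (1 - r) powr \<kappa> * y)
          = t powr \<kappa> * (r powr \<kappa> * x + (1 - r) powr \<kappa> * y)" for r x y
        using sp by (simp add: powr_divide field_simps)
      then show ?thesis by (auto simp: G_def fun_eq_iff)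
    qed
    finally show ?thesis unfolding Q_def .
  qed

  have LHS: "distr M (borel \<Otimes>\<^sub>M borel) Y = Q"
  proof -
    let ?P = "Pi\<^sub>M {0..} (\<lambda>_. borel) :: (real \<Rightarrow> real) measure"
    let ?B2 = "borel \<Otimes>\<^sub>M borel :: (real \<times> real) measure"
    have rv1[measurable]: "path Z \<in> measurable M ?P" by (rule indep_var_rv1[OF ind])
    have rv2[measurable]: "path \<zeta> \<in> measurable M ?P" by (rule indep_var_rv2[OF ind])
    define PZ where "PZ = distr M ?P (path Z)"
    define Pz where "Pz = distr M ?P (path \<zeta>)"
    have indeq: "PZ \<Otimes>\<^sub>M Pz = distr M (?P \<Otimes>\<^sub>M ?P) (\<lambda>\<omega>. (path Z \<omega>, path \<zeta> \<omega>))"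
      using ind unfolding indep_var_distribution_eq PZ_def Pz_def by auto
    interpret PZ: prob_space PZ unfolding PZ_def by (rule prob_space_distr) simp
    interpret Pz: prob_space Pz unfolding Pz_def by (rule prob_space_distr) simp
    interpret PP: pair_prob_space PZ Pz ..
    have sPP: "sets (PZ \<Otimes>\<^sub>M Pz) = sets (?P \<Otimes>\<^sub>M ?P)"
      by (rule sets_pair_measure_cong) (simp_all add: PZ_def Pz_def)
    have spPZ: "space PZ = space ?P" unfolding PZ_def by simp
    have spPz: "space Pz = space ?P" unfolding Pz_def by simp
    define \<Psi> where "\<Psi> = (\<lambda>p::(real \<Rightarrow> real) \<times> (real \<Rightarrow> real).
        (s powr \<kappa> * fst p 1, t powr \<kappa> * exp (-\<kappa> * snd p L) * ev (fst p) (exp (snd p L))))"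
    have c1[measurable]: "(\<lambda>p::(real \<Rightarrow> real) \<times> (real \<Rightarrow> real). fst p x) \<in> borel_measurable (?P \<Otimes>\<^sub>M ?P)"
      if "x \<ge> 0" for x
      by (rule measurable_compose[OF measurable_fst measurable_component_singleton]) (use that in auto)
    have c2[measurable]: "(\<lambda>p::(real \<Rightarrow> real) \<times> (real \<Rightarrow> real). snd p L) \<in> borel_measurable (?P \<Otimes>\<^sub>M ?P)"
      by (rule measurable_compose[OF measurable_snd measurable_component_singleton]) (use L0 in auto)
    have c2': "(\<lambda>p::(real \<Rightarrow> real) \<times> (real \<Rightarrow> real). exp (snd p L)) \<in> borel_measurable (?P \<Otimes>\<^sub>M ?P)"
      by measurable
    have c2'': "(\<lambda>p::(real \<Rightarrow> real) \<times> (real \<Rightarrow> real). exp (-\<kappa> * snd p L)) \<in> borel_measurable (?P \<Otimes>\<^sub>M ?P)"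
      by measurable
    have c3: "(\<lambda>p::(real \<Rightarrow> real) \<times> (real \<Rightarrow> real). ev (fst p) (exp (snd p L))) \<in> borel_measurable (?P \<Otimes>\<^sub>M ?P)"
      by (rule ev_meas[OF c1 c2'])
    have c1': "(\<lambda>p::(real \<Rightarrow> real) \<times> (real \<Rightarrow> real). fst p 1) \<in> borel_measurable (?P \<Otimes>\<^sub>M ?P)"
      by (rule c1) simp
    have \<Psi>m0: "\<Psi> \<in> measurable (?P \<Otimes>\<^sub>M ?P) ?B2"
      unfolding \<Psi>_def
      by (intro measurable_Pair borel_measurable_times borel_measurable_const c1' c2'' c3)
    have \<Psi>m: "\<Psi> \<in> measurable (PZ \<Otimes>\<^sub>M Pz) ?B2"
      unfolding measurable_cong_sets[OF sPP refl] by (rule \<Psi>m0)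
    have ppm: "(\<lambda>\<omega>. (path Z \<omega>, path \<zeta> \<omega>)) \<in> measurable M (?P \<Otimes>\<^sub>M ?P)"
      by (intro measurable_Pair rv1 rv2)
    have Yeq: "Y \<omega> = \<Psi> (path Z \<omega>, path \<zeta> \<omega>)" for \<omega>
    proof -
      have "ev (path Z \<omega>) (exp (\<zeta> L \<omega>)) = Z (exp (\<zeta> L \<omega>)) \<omega>" by (rule ev_path[OF cad]) simp
      moreover have "path Z \<omega> 1 = Z 1 \<omega>" "path \<zeta> \<omega> L = \<zeta> L \<omega>" unfolding path_def using L0 by auto
      ultimately show ?thesis unfolding Y_def \<Psi>_def by simp
    qed
    have D1: "distr M ?B2 Y = distr (PZ \<Otimes>\<^sub>M Pz) ?B2 \<Psi>"
    proof -
      have "distr M ?B2 Y = distr M ?B2 (\<Psi> \<circ> (\<lambda>\<omega>. (path Z \<omega>, path \<zeta> \<omega>)))"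
        by (rule distr_cong) (auto simp: Yeq)
      also have "\<dots> = distr (distr M (?P \<Otimes>\<^sub>M ?P) (\<lambda>\<omega>. (path Z \<omega>, path \<zeta> \<omega>))) ?B2 \<Psi>"
        by (rule distr_distr[symmetric, OF \<Psi>m0 ppm])
      finally show ?thesis unfolding indeq .
    qed
    have "distr (PZ \<Otimes>\<^sub>M Pz) ?B2 \<Psi> = Q"
    proof (rule measure_eqI)
      show "sets (distr (PZ \<Otimes>\<^sub>M Pz) ?B2 \<Psi>) = sets Q" by (simp add: Q_def)
      fix S assume "S \<in> sets (distr (PZ \<Otimes>\<^sub>M Pz) ?B2 \<Psi>)"
      then have S: "S \<in> sets ?B2" by simp
      define V where "V = \<Psi> -` S \<inter> space (PZ \<Otimes>\<^sub>M Pz)"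
      have Vs: "V \<in> sets (PZ \<Otimes>\<^sub>M Pz)" unfolding V_def by (rule measurable_sets[OF \<Psi>m S])
      define W where "W = G -` S \<inter> space (DR \<Otimes>\<^sub>M (DZ \<Otimes>\<^sub>M DZ))"
      have Ws: "W \<in> sets (DR \<Otimes>\<^sub>M (DZ \<Otimes>\<^sub>M DZ))" unfolding W_def by (rule measurable_sets[OF Gm S])
      define K where "K r = emeasure (DZ \<Otimes>\<^sub>M DZ) (Pair r -` W)" for r
      have Km: "K \<in> borel_measurable DR" unfolding K_def by (rule RZZ.measurable_emeasure_Pair1[OF Ws])
      have Km': "K \<in> borel_measurable borel" using Km unfolding measurable_cong_sets[OF sDR refl] .
      have inner: "emeasure PZ ((\<lambda>f. (f, path \<zeta> \<omega>)) -` V) = K (exp (- \<zeta> L \<omega>))" if \<omega>: "\<omega> \<in> space M" for \<omega>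
      proof -
        let ?g = "path \<zeta> \<omega>"
        have g: "?g \<in> space ?P" using measurable_space[OF rv2 \<omega>] .
        have gL: "?g L = \<zeta> L \<omega>" unfolding path_def using L0 by simp
        define c where "c = exp (\<zeta> L \<omega>)"
        define r0 where "r0 = exp (- \<zeta> L \<omega>)"
        define e where "e = exp (- \<kappa> * \<zeta> L \<omega>)"
        have c1: "c \<ge> 1" unfolding c_def using znn[OF L0] by simp
        define H where "H = {p::real \<times> real. (s powr \<kappa> * fst p, t powr \<kappa> * e * snd p) \<in> S}"
        have hm: "(\<lambda>p::real \<times> real. (s powr \<kappa> * fst p, t powr \<kappa> * e * snd p)) \<in> measurable ?B2 ?B2" by simp
        have Hs: "H \<in> sets ?B2"
        proof -
          have "H = (\<lambda>p::real \<times> real. (s powr \<kappa> * fst p, t powr \<kappa> * e * snd p)) -` S \<inter> space ?B2"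
            unfolding H_def by (auto simp: space_pair_measure)
          then show ?thesis using measurable_sets[OF hm S] by (simp only:)
        qed
        have sl: "(\<lambda>f. (f, ?g)) -` V = (\<lambda>f. \<Psi> (f, ?g)) -` S \<inter> space ?P"
          unfolding V_def using g by (auto simp: space_pair_measure spPZ spPz)
        have slm: "(\<lambda>f. \<Psi> (f, ?g)) \<in> measurable ?P ?B2"
          by (rule measurable_compose[OF measurable_Pair2'[OF g] \<Psi>m0])
        have E1: "emeasure PZ ((\<lambda>f. (f, ?g)) -` V) = emeasure M (path Z -` ((\<lambda>f. \<Psi> (f, ?g)) -` S \<inter> space ?P) \<inter> space M)"
          unfolding sl PZ_def by (rule emeasure_distr[OF rv1 measurable_sets[OF slm S]])
        have E2: "path Z -` ((\<lambda>f. \<Psi> (f, ?g)) -` S \<inter> space ?P) \<inter> space M = (\<lambda>\<omega>'. (Z 1 \<omega>', Z c \<omega>')) -` H \<inter> space M"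
        proof -
          have "\<Psi> (path Z \<omega>', ?g) = (s powr \<kappa> * Z 1 \<omega>', t powr \<kappa> * e * Z c \<omega>')" for \<omega>'
          proof -
            have "ev (path Z \<omega>') (exp (\<zeta> L \<omega>)) = Z (exp (\<zeta> L \<omega>)) \<omega>'" by (rule ev_path[OF cad]) simp
            moreover have "path Z \<omega>' 1 = Z 1 \<omega>'" unfolding path_def by simp
            ultimately show ?thesis unfolding \<Psi>_def c_def e_def by (simp add: gL)
          qed
          then show ?thesis using measurable_space[OF rv1] unfolding H_def by auto
        qed
        have E3: "emeasure M ((\<lambda>\<omega>'. (Z 1 \<omega>', Z c \<omega>')) -` H \<inter> space M)
            = emeasure (distr M ?B2 (\<lambda>\<omega>'. (Z 1 \<omega>', Z c \<omega>'))) H"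
        proof (rule emeasure_distr[symmetric, OF _ Hs])
          have [measurable]: "Z c \<in> borel_measurable M" by (rule Zm) (use c1 in simp)
          show "(\<lambda>\<omega>'. (Z 1 \<omega>', Z c \<omega>')) \<in> measurable M ?B2" by (intro measurable_Pair) simp_all
        qed
        have E4: "distr M ?B2 (\<lambda>\<omega>'. (Z 1 \<omega>', Z c \<omega>'))
            = distr (DZ \<Otimes>\<^sub>M DZ) ?B2 (\<lambda>(x, y). (x, x + (c - 1) powr (1/\<alpha>) * y))"
          unfolding DZ_def by (rule pair_law[OF a1 _ _ gam PM Lev c1]) (use AB in auto)
        have E5: "emeasure (distr (DZ \<Otimes>\<^sub>M DZ) ?B2 (\<lambda>(x, y). (x, x + (c - 1) powr (1/\<alpha>) * y))) H
            = emeasure (DZ \<Otimes>\<^sub>M DZ) ((\<lambda>(x, y). (x, x + (c - 1) powr (1/\<alpha>) * y)) -` H \<inter> space (DZ \<Otimes>\<^sub>M DZ))"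
        proof (rule emeasure_distr[OF _ Hs])
          have "(\<lambda>(x::real, y::real). (x, x + (c - 1) powr (1/\<alpha>) * y)) \<in> measurable ?B2 ?B2" by simp
          then show "(\<lambda>(x, y). (x, x + (c - 1) powr (1/\<alpha>) * y)) \<in> measurable (DZ \<Otimes>\<^sub>M DZ) ?B2"
            unfolding measurable_cong_sets[OF sZZ refl] .
        qed
        have E6: "(\<lambda>(x, y). (x, x + (c - 1) powr (1/\<alpha>) * y)) -` H \<inter> space (DZ \<Otimes>\<^sub>M DZ) = Pair r0 -` W"
        proof -
          have er: "e = r0 powr \<kappa>" unfolding e_def r0_def by (simp add: exp_powr_real mult.commute)
          have rc: "r0 * (c - 1) = 1 - r0" unfolding r0_def c_def by (simp add: exp_minus field_simps)
          have key: "e * (x + (c - 1) powr (1/\<alpha>) * y) = r0 powr \<kappa> * x + (1 - r0) powr \<kappa> * y" for x y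
          proof -
            have "e * (c - 1) powr (1/\<alpha>) = (1 - r0) powr \<kappa>"
              unfolding er kap by (simp add: powr_mult[symmetric] rc)
            then show ?thesis unfolding er by (simp add: algebra_simps)
          qed
          have spR: "space DR = UNIV" unfolding DR_def by simp
          show ?thesis unfolding H_def W_def G_def
            by (auto simp: space_pair_measure spR key[symmetric] mult.assoc)
        qed
        have "emeasure PZ ((\<lambda>f. (f, ?g)) -` V) = emeasure (DZ \<Otimes>\<^sub>M DZ) (Pair r0 -` W)"
          unfolding E1 E2 E3 E4 E5 E6 ..
        then show ?thesis unfolding K_def r0_def .
      qed
      have rm: "(\<lambda>\<omega>. exp (- \<zeta> L \<omega>)) \<in> borel_measurable M" by measurable
      have "emeasure (distr (PZ \<Otimes>\<^sub>M Pz) ?B2 \<Psi>) S = emeasure (PZ \<Otimes>\<^sub>M Pz) V"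
        unfolding V_def by (rule emeasure_distr[OF \<Psi>m S])
      also have "\<dots> = (\<integral>\<^sup>+g. emeasure PZ ((\<lambda>f. (f, g)) -` V) \<partial>Pz)"
        by (rule PP.emeasure_pair_measure_alt2[OF Vs])
      also have "\<dots> = (\<integral>\<^sup>+\<omega>. emeasure PZ ((\<lambda>f. (f, path \<zeta> \<omega>)) -` V) \<partial>M)"
        unfolding Pz_def by (rule nn_integral_distr[OF rv2 PP.measurable_emeasure_Pair2[OF Vs, unfolded Pz_def]])
      also have "\<dots> = (\<integral>\<^sup>+\<omega>. K (exp (- \<zeta> L \<omega>)) \<partial>M)"
        by (rule nn_integral_cong) (rule inner)
      also have "\<dots> = (\<integral>\<^sup>+r. K r \<partial>DR)"
        unfolding DR_def by (rule nn_integral_distr[symmetric, OF rm]) (simp add: Km')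
      also have "\<dots> = emeasure (DR \<Otimes>\<^sub>M (DZ \<Otimes>\<^sub>M DZ)) W"
        unfolding K_def by (rule ZZ.P.emeasure_pair_measure_alt[OF Ws, symmetric])
      also have "\<dots> = emeasure Q S"
        unfolding Q_def W_def by (rule emeasure_distr[OF Gm S, symmetric])
      finally show "emeasure (distr (PZ \<Otimes>\<^sub>M Pz) ?B2 \<Psi>) S = emeasure Q S" .
    qed
    with D1 show ?thesis by simp
  qed

  show ?thesis
    using XY LHS RHS unfolding DZ_def DR_def L_def by simp
qed


end
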